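(* Let $N=\{1,\dots,n\}$ be agents and $M=\{1,\dots,m\}$ chores, where all agents share an identical additive valuation $V$ with $V(\{j\})\le0$ for all $j$ and $V(M)=-1$, and shares $s_i\in(0,1]$ with $\sum_is_i=1$. Let $\langle X_1,\dots,X_n\rangle$ be the output of Algorithm $\mathsf{EgalGreedy}$. Then $V(X_i)\ge 2\,\mathsf{WMMS}_i$ for every $i\in N$.
   Context: Algorithm $\mathsf{EgalGreedy}$: start with $X_i=\emptyset$ for all $i$; order the chores so that $V(\{1\})\le V(\{2\})\le\dots\le V(\{m\})$ (most costly first); for $j=1,\dots,m$ in this order, pick $i^*\in\arg\max_{i\in N}\frac{V(X_i\cup\{j\})}{s_i}$ (ties broken arbitrarily) and set $X_{i^*}\leftarrow X_{i^*}\cup\{j\}$; return $\langle X_1,\dots,X_n\rangle$. The weighted maxmin share is $\mathsf{WMMS}_i:=\max_{\langle Y_1,\dots,Y_n\rangle}\min_{k\in N}V(Y_k)\frac{s_i}{s_k}$, the maximum over all ordered partitions of $M$ into $n$ possibly empty bundles. *)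

theory Defs
  imports Complex_Main "HOL-Library.FuncSet"
begin

definition V :: "(nat \<Rightarrow> real) \<Rightarrow> nat set \<Rightarrow> real" where
  "V v S = (\<Sum>j\<in>S. v j)"

text \<open>Weighted maxmin share of agent i: maximum over all ordered partitions of M into
  n (possibly empty) bundles Y_1..Y_n, represented by the assignment f : M \<rightarrow> N
  with Y_k = {j \<in> M. f j = k}.\<close>

definition WMMS :: "nat \<Rightarrow> nat \<Rightarrow> (nat \<Rightarrow> real) \<Rightarrow> (nat \<Rightarrow> real) \<Rightarrow> nat \<Rightarrow> real" where
  "WMMS n m v s i =
     Max ((\<lambda>f. Min ((\<lambda>k. V v {j \<in> {1..m}. f j = k} * s i / s k) ` {1..n}))
          ` ({1..m} \<rightarrow>\<^sub>E {1..n}))"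

text \<open>Executions of EgalGreedy (chores already sorted, processed in order 1,2,..,m),
  with arbitrary tie-breaking: egal_run n v s j X means that after processing
  chores 1..j a possible state of the allocation is X.\<close>

inductive egal_run :: "nat \<Rightarrow> (nat \<Rightarrow> real) \<Rightarrow> (nat \<Rightarrow> real) \<Rightarrow> nat \<Rightarrow> (nat \<Rightarrow> nat set) \<Rightarrow> bool"
  for n :: nat and v :: "nat \<Rightarrow> real" and s :: "nat \<Rightarrow> real" where
  start: "egal_run n v s 0 (\<lambda>_. {})"
| step: "\<lbrakk> egal_run n v s j X; i \<in> {1..n};
           \<forall>k\<in>{1..n}. V v (X k \<union> {Suc j}) / s k \<le> V v (X i \<union> {Suc j}) / s i \<rbrakk>
         \<Longrightarrow> egal_run n v s (Suc j) (X(i := X i \<union> {Suc j}))"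

end

theory Submission
  imports Defs
begin

lemma sum_le_member_nonpos:
  fixes g :: "nat \<Rightarrow> real"
  assumes "finite S" "x \<in> S" "\<forall>y\<in>S. g y \<le> 0"
  shows "sum g S \<le> g x"
proof -
  have "sum g S = g x + sum g (S - {x})" using assms by (simp add: sum.remove)
  moreover have "sum g (S - {x}) \<le> 0" using assms by (intro sum_nonpos) auto
  ultimately show ?thesis by simp
qed

lemma run_inv:
  assumes "egal_run n v s t X"
  shows "(\<forall>k. X k \<subseteq> {1..t}) \<and> (\<Sum>k\<in>{1..n}. V v (X k)) = V v {1..t}"
  using assms
proof (induction rule: egal_run.induct)
  case start
  then show ?case by (simp add: V_def)
next
  case (step j X i)
  have sub: "\<forall>k. X k \<subseteq> {1..j}" using step.IH by blast
  have nin: "Suc j \<notin> X i" using sub[rule_format, of i] by auto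
  have fin: "finite (X i)" using sub by (meson finite_atLeastAtMost finite_subset)
  have Vi: "V v (X i \<union> {Suc j}) = V v (X i) + v (Suc j)"
    using nin fin by (simp add: V_def)
  have "(\<Sum>k\<in>{1..n}. V v ((X(i := X i \<union> {Suc j})) k))
       = (\<Sum>k\<in>{1..n}. V v (X k) + (if k = i then v (Suc j) else 0))"
    by (rule sum.cong) (auto simp: Vi[simplified])
  also have "\<dots> = (\<Sum>k\<in>{1..n}. V v (X k)) + v (Suc j)"
    using step.hyps(2) by (simp add: sum.distrib)
  also have "\<dots> = V v {1..Suc j}"
    using step.IH by (simp add: V_def)
  moreover have "\<forall>k. (X(i := X i \<union> {Suc j})) k \<subseteq> {1..Suc j}"
    using sub by (auto simp: subset_iff) (meson atLeastAtMost_iff le_SucI)+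
  ultimately show ?case by simp
qed

lemma main_inv:
  fixes v s :: "nat \<Rightarrow> real" and f :: "nat \<Rightarrow> nat" and lam :: real
  assumes nonpos: "\<forall>j\<in>{1..m}. v j \<le> 0"
    and sorted: "\<forall>j\<in>{1..m}. \<forall>j'\<in>{1..m}. j \<le> j' \<longrightarrow> v j \<le> v j'"
    and shares: "\<forall>i\<in>{1..n}. 0 < s i \<and> s i \<le> 1"
    and fP: "f \<in> {1..m} \<rightarrow>\<^sub>E {1..n}"
    and lamY: "\<forall>k\<in>{1..n}. lam * s k \<le> V v {x \<in> {1..m}. f x = k}"
    and run: "egal_run n v s t X"
  shows "t \<le> m \<longrightarrow> (\<forall>k\<in>{1..n}. 2 * lam * s k \<le> V v (X k))"
  using run
proof (induction rule: egal_run.induct)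
  case start
  then show ?case using lamY nonpos
    apply (auto simp: V_def)
    by (smt (verit, ccfv_SIG) mult_nonneg_nonneg shares sum_nonpos mem_Collect_eq atLeastAtMost_iff)
next
  case (step j X i)
  show ?case
  proof
    assume jm: "Suc j \<le> m"
    have IH: "\<forall>k\<in>{1..n}. 2 * lam * s k \<le> V v (X k)" using step.IH jm by simp
    have inv: "(\<forall>k. X k \<subseteq> {1..j}) \<and> (\<Sum>k\<in>{1..n}. V v (X k)) = V v {1..j}"
      using run_inv[OF step.hyps(1)] .
    define w where "w = v (Suc j)"
    define A where "A = {k\<in>{1..n}. lam * s k \<le> w}"
    have XVle: "\<And>k. V v (X k) \<le> 0"
    proof -
      fix k
      have "X k \<subseteq> {1..m}" using inv jm by force
      then show "V v (X k) \<le> 0" unfolding V_def using nonpos by (intro sum_nonpos) auto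
    qed
    have Yle: "V v {x \<in> {1..m}. f x = k} \<le> v j'" if "j' \<in> {1..m}" "f j' = k" for k j'
      unfolding V_def using that nonpos by (intro sum_le_member_nonpos) auto
    have jA: "f j' \<in> A" if "j' \<in> {1..Suc j}" for j'
    proof -
      have j'm: "j' \<in> {1..m}" using that jm by auto
      have fn: "f j' \<in> {1..n}" using fP j'm by auto
      have "lam * s (f j') \<le> V v {x \<in> {1..m}. f x = f j'}" using lamY fn by blast
      also have "\<dots> \<le> v j'" using Yle[OF j'm] by simp
      also have "\<dots> \<le> w" unfolding w_def using sorted j'm jm that by auto
      finally show ?thesis using fn unfolding A_def by blast
    qed
    have claim: "\<exists>k\<in>A. lam * s k \<le> V v (X k)"
    proof (rule ccontr)
      assume "\<not> ?thesis"
      then have lt: "\<forall>k\<in>A. V v (X k) < lam * s k" by auto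
      have finA: "finite A" unfolding A_def by simp
      have neA: "A \<noteq> {}" using jA[of "Suc j"] by auto
      have AN: "A \<subseteq> {1..n}" unfolding A_def by auto
      have c1: "(\<Sum>k\<in>A. V v (X k)) < (\<Sum>k\<in>A. lam * s k)"
        using finA neA lt by (intro sum_strict_mono) auto
      have c2: "(\<Sum>k\<in>A. lam * s k) \<le> (\<Sum>k\<in>A. V v {x \<in> {1..m}. f x = k})"
        using lamY AN by (intro sum_mono) auto
      define S where "S = {x \<in> {1..m}. f x \<in> A}"
      have c3: "(\<Sum>k\<in>A. V v {x \<in> {1..m}. f x = k}) = sum v S"
      proof -
        have "(\<Sum>k\<in>A. sum v {x. x \<in> S \<and> f x = k}) = sum v S"
          using finA by (intro sum.group) (auto simp: S_def)
        moreover have "\<And>k. k \<in> A \<Longrightarrow> {x. x \<in> S \<and> f x = k} = {x \<in> {1..m}. f x = k}"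
          unfolding S_def by auto
        ultimately show ?thesis unfolding V_def by simp
      qed
      have sub1: "{1..Suc j} \<subseteq> S" unfolding S_def using jA jm by auto
      have c4: "sum v S \<le> sum v {1..Suc j}"
      proof -
        have "sum v S = sum v (S - {1..Suc j}) + sum v {1..Suc j}"
          using sub1 by (intro sum.subset_diff) (auto simp: S_def)
        moreover have "sum v (S - {1..Suc j}) \<le> 0" using nonpos by (intro sum_nonpos) (auto simp: S_def)
        ultimately show ?thesis by simp
      qed
      have c5: "sum v {1..Suc j} \<le> sum v {1..j}"
        using nonpos jm by simp
      have c6: "(\<Sum>k\<in>{1..n}. V v (X k)) \<le> (\<Sum>k\<in>A. V v (X k))"
      proof -
        have "(\<Sum>k\<in>{1..n}. V v (X k)) = (\<Sum>k\<in>{1..n} - A. V v (X k)) + (\<Sum>k\<in>A. V v (X k))"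
          using AN by (intro sum.subset_diff) auto
        moreover have "(\<Sum>k\<in>{1..n} - A. V v (X k)) \<le> 0" using XVle by (intro sum_nonpos) auto
        ultimately show ?thesis by simp
      qed
      show False using c1 c2 c3 c4 c5 c6 inv unfolding V_def by linarith
    qed
    then obtain k where kA: "k \<in> A" and kX: "lam * s k \<le> V v (X k)" by blast
    have kn: "k \<in> {1..n}" and kw: "lam * s k \<le> w" using kA unfolding A_def by auto
    have sk: "s k > 0" using shares kn by auto
    have si: "s i > 0" using shares step.hyps(2) by auto
    have nk: "Suc j \<notin> X k" using inv[THEN conjunct1, rule_format, of k] by auto
    have fk: "finite (X k)" using inv by (meson finite_atLeastAtMost finite_subset)
    have Vk: "V v (X k \<union> {Suc j}) = V v (X k) + w"
      using nk fk by (simp add: V_def w_def)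
    have "2 * lam \<le> V v (X k \<union> {Suc j}) / s k"
      using Vk kX kw sk by (simp add: field_simps)
    also have "\<dots> \<le> V v (X i \<union> {Suc j}) / s i" using step.hyps(3) kn by blast
    finally have "2 * lam * s i \<le> V v (X i \<union> {Suc j})" using si by (simp add: field_simps)
    then show "\<forall>k\<in>{1..n}. 2 * lam * s k \<le> V v ((X(i := X i \<union> {Suc j})) k)"
      using IH by auto
  qed
qed

theorem lemma4:
  fixes n m :: nat and v s :: "nat \<Rightarrow> real" and X :: "nat \<Rightarrow> nat set"
  assumes "n \<ge> 1"
    and nonpos: "\<forall>j\<in>{1..m}. v j \<le> 0"
    and total: "V v {1..m} = -1"
    and sorted: "\<forall>j\<in>{1..m}. \<forall>j'\<in>{1..m}. j \<le> j' \<longrightarrow> v j \<le> v j'"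
    and shares: "\<forall>i\<in>{1..n}. 0 < s i \<and> s i \<le> 1"
    and sum_shares: "(\<Sum>i\<in>{1..n}. s i) = 1"
    and run: "egal_run n v s m X"
  shows "\<forall>i\<in>{1..n}. V v (X i) \<ge> 2 * WMMS n m v s i"
proof
  fix i assume i: "i \<in> {1..n}"
  define G where "G = (\<lambda>f k. V v {j \<in> {1..m}. f j = k} * s i / s k)"
  define F where "F = (\<lambda>f. Min (G f ` {1..n}))"
  define P where "P = ({1..m} \<rightarrow>\<^sub>E {1..n})"
  have W: "WMMS n m v s i = Max (F ` P)"
    unfolding WMMS_def F_def G_def P_def by simp
  have finP: "finite P" unfolding P_def by (simp add: finite_PiE)
  have "(\<lambda>x\<in>{1..m}. 1) \<in> P" unfolding P_def using assms(1) by auto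
  then have neP: "P \<noteq> {}" by blast
  obtain f where fP: "f \<in> P" and Wf: "WMMS n m v s i = F f"
  proof -
    have "Max (F ` P) \<in> F ` P" using finP neP by (intro Max_in) auto
    then show ?thesis using that W by auto
  qed
  have neN: "{1..n} \<noteq> {}" using assms(1) by auto
  obtain k0 where k0: "k0 \<in> {1..n}" and Fk0: "F f = G f k0"
  proof -
    have "Min (G f ` {1..n}) \<in> G f ` {1..n}" using neN by (intro Min_in) auto
    then show ?thesis using that unfolding F_def by auto
  qed
  define lam where "lam = V v {j \<in> {1..m}. f j = k0} / s k0"
  have si: "s i > 0" using shares i by auto
  have sk0: "s k0 > 0" using shares k0 by auto
  have lamY: "\<forall>k\<in>{1..n}. lam * s k \<le> V v {x \<in> {1..m}. f x = k}"
  proof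
    fix k assume k: "k \<in> {1..n}"
    have sk: "s k > 0" using shares k by auto
    have "G f k0 \<le> G f k" using Fk0 k unfolding F_def by (metis Min_le finite_atLeastAtMost finite_imageI imageI)
    then have "V v {j \<in> {1..m}. f j = k0} / s k0 * s i \<le> V v {j \<in> {1..m}. f j = k} / s k * s i"
      unfolding G_def by (simp add: field_simps)
    then have "V v {j \<in> {1..m}. f j = k0} / s k0 \<le> V v {j \<in> {1..m}. f j = k} / s k"
      using si by (meson mult_le_cancel_right_pos)
    then show "lam * s k \<le> V v {x \<in> {1..m}. f x = k}" unfolding lam_def using sk
      by (simp add: field_simps)
  qed
  have "2 * lam * s i \<le> V v (X i)"
    using main_inv[OF nonpos sorted shares fP[unfolded P_def] lamY run] i by auto
  moreover have "WMMS n m v s i = lam * s i" using Wf Fk0 unfolding G_def lam_def by simp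
  ultimately show "V v (X i) \<ge> 2 * WMMS n m v s i" by simp
qed

end
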